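(* Consider the weighted age-of-job scheduling problem described below, in which the service (job-completion) time of every network $i\in\{1,\dots,N\}$ is geometric with success probability $q_i$. This scheduling problem is indexable: for every network $i$ and every user $j\in\mathcal{M}_i$, the passive set $\mathcal{P}_j^i(\bar\lambda_i)$ of the single-user problem is monotonically non-decreasing in the activation cost $\bar\lambda_i$ (i.e., $\bar\lambda_{i,1}\le\bar\lambda_{i,2}$ implies $\mathcal{P}_j^i(\bar\lambda_{i,1})\subseteq\mathcal{P}_j^i(\bar\lambda_{i,2})$), and $\mathcal{P}_j^i(\infty)=\mathcal{S}_j^i$.
   Context: Time-slotted system: a central server, $N$ task-specific machine networks, and user groups $\mathcal{M}_i$ ($i=1,\dots,N$). In each slot, user $j\in\mathcal{M}_i$ generates a job with probability $p_j^i>0$; the server keeps a unit-size buffer per (user, group) pair, and arrivals to a full buffer are dropped. Network $i$ can serve at most $\bar M_i$ jobs per slot and the server at most $\bar M$ jobs per slot in total; preemptive-resume service is allowed. The age of job $\Delta_j^i(t)$ is the time the current job of user $j\in\mathcal{M}_i$ has spent in the buffer up to time $t$ (0 if no job). The objective is to minimize the long-term average of $\sum_i\sum_j w_j^i\Delta_j^i(t)$ subject to the per-slot capacity constraints. Relaxing the constraints to time-average constraints with Lagrange multipliers $\lambda,\mu_i\ge0$ decouples the problem into single-user problems: minimize $\limsup_{T\to\infty}\frac1T\sum_{t=1}^T\mathbb{E}[w_j^i\Delta_j^i(t)+\bar\lambda_i c_j^i(t)]$, with $\bar\lambda_i=\lambda+\mu_i$ and $c_j^i(t)\in\{0,1\}$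 the action (1 = active/serve, 0 = passive). Network $i$ completes an in-service job at the end of each slot with probability $q_i$ (geometric service), so the state is $s_j^i=(\Delta_j^i,\bar\Delta_j^i)$ with $\bar\Delta_j^i=0$ if a job is present and $\bar\Delta_j^i=\infty$ if the buffer is empty (state $(0,\infty)$); $\mathcal{S}_j^i$ is the state space. Per-slot cost is $w_j^i\Delta_j^i+\bar\lambda_i c_j^i$; only the passive action is allowed in the empty state. Transitions: from $(0,\infty)$, stay w.p. $1-p_j^i$ or go to $(0,0)$ w.p. $p_j^i$; passive with a job: $(\Delta,0)\to(\Delta+1,0)$; active with a job: to $(0,0)$ w.p. $q_ip_j^i$, to $(0,\infty)$ w.p. $q_i(1-p_j^i)$, to $(\Delta+1,0)$ w.p. $1-q_i$. With $\bar V_j^i(s;c,\bar\lambda_i)$ the cost of action $c$ in state $s$ plus the expected relative value (average-cost optimality) of the next state, the passive set is $\mathcal{P}_j^i(\bar\lambda_i)=\{s\in\mathcal{S}_j^i:\bar\Delta_j^i=0,\ \bar V_j^i(s;0,\bar\lambda_i)\le\bar V_j^i(s;1,\bar\lambda_i)\}\cup\{s\in\mathcal{S}_j^i:\bar\Delta_j^i=\infty\}$. A user is indexable if its passive set is monotone in $\bar\lambda_i$ with $\mathcal{P}_j^i(\infty)=\mathcal{S}_j^i$; the scheduling problem is indexable if every user of every network is indexable. *)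

theory Defs
  imports "HOL-Analysis.Analysis" "HOL-Library.Extended_Nonnegative_Real"
begin

text \<open>Single-user problem of user j in network i.
  State (Delta, Deltabar): Empty = (0, infinity) (empty buffer),
  Job d = (d, 0) (a job of age d is present).  Action c :: nat, 1 = active, 0 = passive.\<close>

datatype st = Empty | Job nat

fun age :: "st \<Rightarrow> nat" where
  "age Empty = 0"
| "age (Job d) = d"

definition actions :: "st \<Rightarrow> nat set" where
  "actions s = (if s = Empty then {0} else {0, 1})"

definition cost :: "real \<Rightarrow> real \<Rightarrow> st \<Rightarrow> nat \<Rightarrow> real" where
  "cost w lam s c = w * real (age s) + lam * real c"

text \<open>Transition kernel as a list of (probability, next state) pairs
  (arrival probability p, geometric service with success probability q).\<close>
fun kernel :: "real \<Rightarrow> real \<Rightarrow> st \<Rightarrow> nat \<Rightarrow> (real \<times> st) list" where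
  "kernel p q Empty c = [(1 - p, Empty), (p, Job 0)]"
| "kernel p q (Job d) c =
     (if c = 0 then [(1, Job (Suc d))]
      else [(q * p, Job 0), (q * (1 - p), Empty), (1 - q, Job (Suc d))])"

definition expect :: "real \<Rightarrow> real \<Rightarrow> st \<Rightarrow> nat \<Rightarrow> (st \<Rightarrow> real) \<Rightarrow> real" where
  "expect p q s c f = (\<Sum>(\<pi>, s') \<leftarrow> kernel p q s c. \<pi> * f s')"

definition expect_enn :: "real \<Rightarrow> real \<Rightarrow> st \<Rightarrow> nat \<Rightarrow> (st \<Rightarrow> ennreal) \<Rightarrow> ennreal" where
  "expect_enn p q s c f = (\<Sum>(\<pi>, s') \<leftarrow> kernel p q s c. ennreal \<pi> * f s')"

text \<open>Discounted Bellman operator (discount factor beta) and the optimal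
  beta-discounted cost, which for nonnegative costs is the least fixed point.\<close>
definition bellman :: "real \<Rightarrow> real \<Rightarrow> real \<Rightarrow> real \<Rightarrow> real \<Rightarrow> (st \<Rightarrow> ennreal) \<Rightarrow> st \<Rightarrow> ennreal" where
  "bellman p q w lam \<beta> V s =
     (let Q = (\<lambda>c. ennreal (cost w lam s c) + ennreal \<beta> * expect_enn p q s c V)
      in if s = Empty then Q 0 else min (Q 0) (Q 1))"

definition disc_value :: "real \<Rightarrow> real \<Rightarrow> real \<Rightarrow> real \<Rightarrow> real \<Rightarrow> st \<Rightarrow> ennreal" where
  "disc_value p q w lam \<beta> = lfp (bellman p q w lam \<beta>)"

text \<open>Relative value function of the average-cost problem (vanishing discount):
  h(s) = lim_{beta -> 1-} (V_beta(s) - V_beta(Empty)).\<close>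
definition rel_value :: "real \<Rightarrow> real \<Rightarrow> real \<Rightarrow> real \<Rightarrow> st \<Rightarrow> real" where
  "rel_value p q w lam s =
     Lim (at_left 1) (\<lambda>\<beta>. enn2real (disc_value p q w lam \<beta> s)
                          - enn2real (disc_value p q w lam \<beta> Empty))"

definition Vbar :: "real \<Rightarrow> real \<Rightarrow> real \<Rightarrow> st \<Rightarrow> nat \<Rightarrow> real \<Rightarrow> real" where
  "Vbar p q w s c lam = cost w lam s c + expect p q s c (rel_value p q w lam)"

text \<open>Passive set P(lambdabar).  The state space S is UNIV :: st set.\<close>
definition passive_set :: "real \<Rightarrow> real \<Rightarrow> real \<Rightarrow> real \<Rightarrow> st set" where
  "passive_set p q w lam =
     {s. s \<noteq> Empty \<and> Vbar p q w s 0 lam \<le> Vbar p q w s 1 lam} \<union> {Empty}"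

text \<open>Indexability of a single user: monotone passive set, and P(infinity) = S,
  read as: every state is passive for some finite activation cost.\<close>
definition user_indexable :: "real \<Rightarrow> real \<Rightarrow> real \<Rightarrow> bool" where
  "user_indexable p q w \<longleftrightarrow>
     (\<forall>lam1 lam2. 0 \<le> lam1 \<longrightarrow> lam1 \<le> lam2 \<longrightarrow> passive_set p q w lam1 \<subseteq> passive_set p q w lam2)
     \<and> (\<Union>lam\<in>{0..}. passive_set p q w lam) = (UNIV :: st set)"

definition problem_indexable ::
  "nat \<Rightarrow> (nat \<Rightarrow> 'u set) \<Rightarrow> (nat \<Rightarrow> 'u \<Rightarrow> real) \<Rightarrow> (nat \<Rightarrow> real) \<Rightarrow> (nat \<Rightarrow> 'u \<Rightarrow> real) \<Rightarrow> bool" where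
  "problem_indexable N M p q w \<longleftrightarrow>
     (\<forall>i\<in>{1..N}. \<forall>j\<in>M i. user_indexable (p i j) (q i) (w i j))"

end

theory Submission imports Defs begin

definition cc :: "real \<Rightarrow> real \<Rightarrow> real" where "cc q b = 1 - b*(1-q)"
definition uinf :: "real \<Rightarrow> real \<Rightarrow> real \<Rightarrow> real \<Rightarrow> real \<Rightarrow> nat \<Rightarrow> real" where
  "uinf q w lam b g d = (w*real d + lam - g)/cc q b + w*(b*(1-q))/(cc q b)^2"
definition uT :: "real \<Rightarrow> real \<Rightarrow> real \<Rightarrow> real \<Rightarrow> real \<Rightarrow> nat \<Rightarrow> nat \<Rightarrow> real" where
  "uT q w lam b g T d = (if T \<le> d then uinf q w lam b g d
     else (\<Sum>k<T-d. b^k*(w*real(d+k) - g)) + b^(T-d)*uinf q w lam b g T)"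
definition AT :: "real \<Rightarrow> real \<Rightarrow> real \<Rightarrow> real \<Rightarrow> nat \<Rightarrow> real" where
  "AT q w lam b T = (\<Sum>k<T. b^k*(w*real k)) + b^T*((w*real T+lam)/cc q b + w*(b*(1-q))/(cc q b)^2)"
definition BT :: "real \<Rightarrow> real \<Rightarrow> nat \<Rightarrow> real" where
  "BT q b T = (\<Sum>k<T. b^k) + b^T/cc q b"
definition gT :: "real \<Rightarrow> real \<Rightarrow> real \<Rightarrow> real \<Rightarrow> real \<Rightarrow> nat \<Rightarrow> real" where
  "gT p q w lam b T = p*AT q w lam b T/(1-p+p*BT q b T)"

lemma cc_pos: "0 < q \<Longrightarrow> 0 \<le> b \<Longrightarrow> b \<le> 1 \<Longrightarrow> 0 < cc q b"
  unfolding cc_def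
proof -
  assume a: "0 < q" "0 \<le> b" "b \<le> 1"
  have "b*(1-q) \<le> b*1" using a by (intro mult_left_mono) auto
  show "0 < 1 - b*(1-q)"
  proof (cases "b = 0")
    case True then show ?thesis by simp
  next
    case False
    then have "b*q > 0" using a by simp
    then show ?thesis using a by (simp add: algebra_simps)
  qed
qed

lemma cc_le1: "0 \<le> q \<Longrightarrow> q \<le> 1 \<Longrightarrow> 0 \<le> b \<Longrightarrow> cc q b \<le> 1"
  unfolding cc_def by (simp add: mult_nonneg_nonneg)

lemma cc_ge: "0 \<le> q \<Longrightarrow> q \<le> 1 \<Longrightarrow> 0 \<le> b \<Longrightarrow> b \<le> 1 \<Longrightarrow> q \<le> cc q b \<and> 1 - b \<le> cc q b"
  unfolding cc_def
proof -
  assume a: "0 \<le> q" "q \<le> 1" "0 \<le> b" "b \<le> 1"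
  have "0 \<le> (1-b)*(1-q)" using a by simp
  have "b*q \<le> 1*q" using a by (intro mult_right_mono) auto
  moreover have "0 \<le> b*q" using a by simp
  ultimately show "q \<le> 1 - b * (1 - q) \<and> 1 - b \<le> 1 - b * (1 - q)" using \<open>0 \<le> (1-b)*(1-q)\<close> by (simp add: algebra_simps)
qed

lemma uT_le: "d \<le> T \<Longrightarrow> uT q w lam b g T d =
   (\<Sum>k<T-d. b^k*(w*real(d+k) - g)) + b^(T-d)*uinf q w lam b g T"
  unfolding uT_def by (cases "d = T") auto

lemma uT_step_pass: "d < T \<Longrightarrow> uT q w lam b g T d = w*real d - g + b*uT q w lam b g T (Suc d)"
proof -
  assume dT: "d < T"
  obtain m where m: "T - d = Suc m" using dT by (metis Suc_diff_Suc)
  have m2: "T - Suc d = m" using m by simp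
  have "uT q w lam b g T d = (\<Sum>k<Suc m. b^k*(w*real(d+k) - g)) + b^(Suc m)*uinf q w lam b g T"
    using uT_le[of d T] dT m by simp
  also have "\<dots> = (w*real d - g) + b*((\<Sum>k<m. b^k*(w*real(Suc d+k) - g)) + b^m*uinf q w lam b g T)"
    by (subst sum.lessThan_Suc_shift) (simp add: sum_distrib_left mult.assoc distrib_left del: sum.lessThan_Suc)
  also have "(\<Sum>k<m. b^k*(w*real(Suc d+k) - g)) + b^m*uinf q w lam b g T = uT q w lam b g T (Suc d)"
    using uT_le[of "Suc d" T] dT m2 by simp
  finally show ?thesis .
qed

lemma uinf_step: "cc q b \<noteq> 0 \<Longrightarrow>
   uinf q w lam b g d = w*real d + lam - g + b*(1-q)*uinf q w lam b g (Suc d)"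
proof -
  assume c: "cc q b \<noteq> 0"
  define c' where "c' = cc q b"
  have bq: "b*(1-q) = 1 - c'" unfolding c'_def cc_def by simp
  have c0: "c' \<noteq> 0" using c c'_def by simp
  show ?thesis unfolding uinf_def c'_def[symmetric] bq
    using c0 by (simp add: field_simps power2_eq_square)
qed

lemma uT_step_act: "cc q b \<noteq> 0 \<Longrightarrow> T \<le> d \<Longrightarrow>
   uT q w lam b g T d = w*real d + lam - g + b*(1-q)*uT q w lam b g T (Suc d)"
proof -
  assume c: "cc q b \<noteq> 0" and T: "T \<le> d"
  show ?thesis using uinf_step[OF c, of w lam g d] T unfolding uT_def by simp
qed

lemma uT0: "uT q w lam b g T 0 = AT q w lam b T - g * BT q b T"
proof -
  define S1 where "S1 = (\<Sum>k<T. b^k*(w*real k))"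
  define S2 where "S2 = (\<Sum>k<T. b^k)"
  define X where "X = (w*real T+lam)/cc q b + w*(b*(1-q))/(cc q b)^2"
  have s: "(\<Sum>k<T. b^k*(w*real(0+k) - g)) = S1 - g*S2"
    unfolding S1_def S2_def
    by (simp add: sum_subtractf sum_distrib_left right_diff_distrib mult.commute)
  have u: "uinf q w lam b g T = X - g/cc q b"
    unfolding uinf_def X_def by (simp add: diff_divide_distrib)
  have e: "uT q w lam b g T 0 = S1 - g*S2 + b^T*(X - g/cc q b)"
    using uT_le[of 0 T q w lam b g] s u by simp
  have a: "AT q w lam b T = S1 + b^T*X" unfolding AT_def S1_def X_def by simp
  have bb: "BT q b T = S2 + b^T/cc q b" unfolding BT_def S2_def by simp
  show ?thesis unfolding e a bb by (simp add: algebra_simps)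
qed

lemma BT_pos: "0 < q \<Longrightarrow> 0 < b \<Longrightarrow> b \<le> 1 \<Longrightarrow> 0 < BT q b T"
  unfolding BT_def using cc_pos[of q b]
  by (intro add_nonneg_pos sum_nonneg) auto

lemma den_pos: "0 < q \<Longrightarrow> 0 < b \<Longrightarrow> b \<le> 1 \<Longrightarrow> 0 < p \<Longrightarrow> p \<le> 1 \<Longrightarrow> 0 < 1 - p + p*BT q b T"
  using BT_pos[of q b T] by (simp add: add_nonneg_pos)

lemma consist: "0 < q \<Longrightarrow> 0 < b \<Longrightarrow> b \<le> 1 \<Longrightarrow> 0 < p \<Longrightarrow> p \<le> 1 \<Longrightarrow>
  (1-p)*gT p q w lam b T = p*uT q w lam b (gT p q w lam b T) T 0"
proof -
  assume a: "0 < q" "0 < b" "b \<le> 1" "0 < p" "p \<le> 1"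
  define A where "A = AT q w lam b T"
  define B where "B = BT q b T"
  have d: "0 < 1 - p + p*B" using den_pos[OF a] B_def by simp
  have g: "gT p q w lam b T = p*A/(1-p+p*B)" unfolding gT_def A_def B_def by simp
  define D where "D = 1 - p + p*B"
  have D0: "D \<noteq> 0" using d D_def by simp
  have "p*(A - p*A/D*B) = p*A*(D - p*B)/D" using D0 by (simp add: field_simps)
  also have "D - p*B = 1 - p" unfolding D_def by simp
  finally have e: "p*(A - p*A/D*B) = (1-p)*(p*A/D)" by simp
  show ?thesis unfolding uT0 A_def[symmetric] B_def[symmetric] g D_def[symmetric]
    using e by simp
qed


definition VT :: "real \<Rightarrow> real \<Rightarrow> real \<Rightarrow> real \<Rightarrow> real \<Rightarrow> nat \<Rightarrow> st \<Rightarrow> real" where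
  "VT p q w lam b T s = (case s of Empty \<Rightarrow> b*(gT p q w lam b T/(1-b))
     | Job d \<Rightarrow> uT q w lam b (gT p q w lam b T) T d + gT p q w lam b T/(1-b))"
definition pol :: "nat \<Rightarrow> st \<Rightarrow> nat" where
  "pol T s = (case s of Empty \<Rightarrow> 0 | Job d \<Rightarrow> if T \<le> d then 1 else 0)"
definition Qr :: "real \<Rightarrow> real \<Rightarrow> real \<Rightarrow> real \<Rightarrow> real \<Rightarrow> (st \<Rightarrow> real) \<Rightarrow> st \<Rightarrow> nat \<Rightarrow> real" where
  "Qr p q w lam b V s c = cost w lam s c + b * expect p q s c V"

lemma expect_E: "expect p q Empty c V = (1-p)*V Empty + p*V (Job 0)"
  by (simp add: expect_def)
lemma expect_J0: "expect p q (Job d) 0 V = V (Job (Suc d))"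
  by (simp add: expect_def)
lemma expect_J1: "c \<noteq> 0 \<Longrightarrow> expect p q (Job d) c V = q*p*V (Job 0) + q*(1-p)*V Empty + (1-q)*V (Job (Suc d))"
  by (simp add: expect_def)

lemma VT_E: "VT p q w lam b T Empty = b*(gT p q w lam b T/(1-b))"
  by (simp add: VT_def)
lemma VT_J: "VT p q w lam b T (Job d) = uT q w lam b (gT p q w lam b T) T d + gT p q w lam b T/(1-b)"
  by (simp add: VT_def)

lemma policy_eq:
  assumes q: "0 < q" "q \<le> 1" and p: "0 < p" "p \<le> 1" and b: "0 < b" "b < 1"
  shows "VT p q w lam b T s = Qr p q w lam b (VT p q w lam b T) s (pol T s)"
proof -
  define g where "g = gT p q w lam b T"
  define Z where "Z = g/(1-b)"
  define u where "u = uT q w lam b g T"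
  have gZ: "g = (1-b)*Z" unfolding Z_def using b by simp
  have VE: "VT p q w lam b T Empty = b*Z" unfolding VT_E Z_def g_def by simp
  have VJ: "\<And>d. VT p q w lam b T (Job d) = u d + Z" unfolding VT_J Z_def g_def u_def by simp
  have cons: "(1-p)*g = p*u 0" unfolding g_def u_def using consist[of q b p w lam T] q p b by simp
  have c0: "cc q b \<noteq> 0" using cc_pos[of q b] q b by simp
  show ?thesis
  proof (cases s)
    case Empty
    have "Qr p q w lam b (VT p q w lam b T) s (pol T s) = b*((1-p)*(b*Z) + p*(u 0 + Z))"
      unfolding Qr_def Empty pol_def expect_E VE VJ by (simp add: cost_def)
    also have "\<dots> = b*((1-p)*(b*Z) + ((1-p)*(1-b)*Z + p*Z))" using cons unfolding gZ
      by (simp add: algebra_simps)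
    also have "\<dots> = b*Z" by (simp add: algebra_simps)
    finally show ?thesis using Empty VE by simp
  next
    case (Job d)
    show ?thesis
    proof (cases "T \<le> d")
      case True
      have "Qr p q w lam b (VT p q w lam b T) s (pol T s) =
          w*real d + lam + b*(q*p*(u 0 + Z) + q*(1-p)*(b*Z) + (1-q)*(u (Suc d) + Z))"
        unfolding Qr_def Job pol_def using True by (simp add: cost_def expect_J1 VE VJ)
      also have "\<dots> = w*real d + lam + b*(q*(p*u 0) + q*p*Z + q*(1-p)*(b*Z) + (1-q)*(u (Suc d) + Z))"
        by (simp add: algebra_simps)
      also have "\<dots> = w*real d + lam + b*(q*((1-p)*(1-b)*Z) + q*p*Z + q*(1-p)*(b*Z) + (1-q)*(u (Suc d) + Z))"
        using cons gZ by simp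
      also have "\<dots> = w*real d + lam - (1-b)*Z + b*(1-q)*u (Suc d) + Z"
        by (simp add: algebra_simps)
      also have "\<dots> = u d + Z"
      proof -
        have "u d = w*real d + lam - g + b*(1-q)*u (Suc d)"
          using uT_step_act[OF c0 True, of w lam g] unfolding u_def by simp
        then show ?thesis using gZ by simp
      qed
      finally show ?thesis using Job VJ by simp
    next
      case False
      have "Qr p q w lam b (VT p q w lam b T) s (pol T s) = w*real d + b*(u (Suc d) + Z)"
        unfolding Qr_def Job pol_def using False by (simp add: cost_def expect_J0 VE VJ)
      also have "\<dots> = w*real d - (1-b)*Z + b*u (Suc d) + Z"
        by (simp add: algebra_simps)
      also have "\<dots> = u d + Z"
      proof -
        have "u d = w*real d - g + b*u (Suc d)"
          using uT_step_pass[of d T q w lam b g] False unfolding u_def by simp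
        then show ?thesis using gZ by simp
      qed
      finally show ?thesis using Job VJ by simp
    qed
  qed
qed


lemma AT_nonneg: "0 < q \<Longrightarrow> q \<le> 1 \<Longrightarrow> 0 \<le> b \<Longrightarrow> b \<le> 1 \<Longrightarrow> 0 \<le> w \<Longrightarrow> 0 \<le> lam \<Longrightarrow> 0 \<le> AT q w lam b T"
  unfolding AT_def using cc_pos[of q b]
  by (intro add_nonneg_nonneg sum_nonneg mult_nonneg_nonneg divide_nonneg_pos) auto

lemma gT_nonneg: "0 < q \<Longrightarrow> q \<le> 1 \<Longrightarrow> 0 < b \<Longrightarrow> b \<le> 1 \<Longrightarrow> 0 < p \<Longrightarrow> p \<le> 1 \<Longrightarrow> 0 \<le> w \<Longrightarrow> 0 \<le> lam \<Longrightarrow>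
  0 \<le> gT p q w lam b T"
  unfolding gT_def using den_pos[of q b p T] AT_nonneg[of q b w lam T]
  by (intro divide_nonneg_pos mult_nonneg_nonneg) auto

lemma VT_nonneg:
  assumes q: "0 < q" "q \<le> 1" and p: "0 < p" "p \<le> 1" and b: "0 < b" "b < 1"
    and w: "0 \<le> w" and lam: "0 \<le> lam"
  shows "0 \<le> VT p q w lam b T s"
proof -
  define g where "g = gT p q w lam b T"
  have g0: "0 \<le> g" unfolding g_def using gT_nonneg[of q b p w lam T] assms by simp
  have c: "0 < cc q b" "1 - b \<le> cc q b" using cc_pos[of q b] cc_ge[of q b] assms by auto
  have Zc: "g / cc q b \<le> g/(1-b)"
    using c g0 b by (intro divide_left_mono) auto
  have hi: "0 \<le> VT p q w lam b T (Job d)" if "T \<le> d" for d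
  proof -
    have "VT p q w lam b T (Job d) = (w*real d + lam)/cc q b + w*(b*(1-q))/(cc q b)^2 + (g/(1-b) - g/cc q b)"
      unfolding VT_J g_def[symmetric] uT_def uinf_def using that by (simp add: diff_divide_distrib)
    moreover have "0 \<le> (w*real d + lam)/cc q b" using c w lam by simp
    moreover have "0 \<le> w*(b*(1-q))/(cc q b)^2" using c w q b by simp
    ultimately show ?thesis using Zc by linarith
  qed
  have lo: "\<forall>d. T - d \<le> n \<longrightarrow> 0 \<le> VT p q w lam b T (Job d)" for n
  proof (induction n)
    case 0 then show ?case using hi by simp
  next
    case (Suc n)
    show ?case
    proof (intro allI impI)
      fix d assume dn: "T - d \<le> Suc n"
      show "0 \<le> VT p q w lam b T (Job d)"
      proof (cases "T \<le> d")
        case True then show ?thesis using hi by simp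
      next
        case False
        have "VT p q w lam b T (Job d) = Qr p q w lam b (VT p q w lam b T) (Job d) (pol T (Job d))"
          using policy_eq[OF q p b] by simp
        also have "\<dots> = w * real d + b * VT p q w lam b T (Job (Suc d))"
          using False by (simp add: Qr_def pol_def cost_def expect_J0)
        finally show ?thesis using Suc.IH dn False w b by (simp add: mult_nonneg_nonneg)
      qed
    qed
  qed
  show ?thesis
  proof (cases s)
    case Empty then show ?thesis unfolding Empty VT_E g_def[symmetric] using g0 b by simp
  next
    case (Job d) then show ?thesis using lo[of "T - d"] by simp
  qed
qed

lemma VT_growth:
  assumes q: "0 < q" "q \<le> 1" and p: "0 < p" "p \<le> 1" and b: "0 < b" "b < 1"
    and w: "0 \<le> w" and lam: "0 \<le> lam"
  shows "\<exists>C B. 0 \<le> C \<and> 0 \<le> B \<and> (\<forall>s. VT p q w lam b T s \<le> C + B * real (age s))"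
proof -
  define g where "g = gT p q w lam b T"
  define K0 where "K0 = (lam - g)/cc q b + w*(b*(1-q))/(cc q b)^2 + g/(1-b)"
  define C where "C = \<bar>K0\<bar> + (\<Sum>d<T. VT p q w lam b T (Job d)) + VT p q w lam b T Empty"
  define B where "B = w / cc q b"
  have c: "0 < cc q b" using cc_pos[of q b] assms by auto
  have nn: "\<And>s. 0 \<le> VT p q w lam b T s" using VT_nonneg[OF q p b w lam] by blast
  have sum0: "0 \<le> (\<Sum>d<T. VT p q w lam b T (Job d))" using nn by (simp add: sum_nonneg)
  have B0: "0 \<le> B" unfolding B_def using c w by simp
  have "\<forall>s. VT p q w lam b T s \<le> C + B * real (age s)"
  proof
    fix s show "VT p q w lam b T s \<le> C + B * real (age s)"
    proof (cases s)
      case Empty then show ?thesis unfolding C_def using sum0 by simp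
    next
      case (Job d)
      show ?thesis
      proof (cases "T \<le> d")
        case True
        have "VT p q w lam b T (Job d) = B * real d + K0"
          unfolding VT_J g_def[symmetric] uT_def uinf_def B_def K0_def using True
          by (simp add: diff_divide_distrib add_divide_distrib)
        then show ?thesis using Job sum0 nn[of Empty] unfolding C_def by simp
      next
        case False
        then have "VT p q w lam b T (Job d) \<le> (\<Sum>d<T. VT p q w lam b T (Job d))"
          using nn by (intro member_le_sum) auto
        moreover have "0 \<le> B * real d" using B0 by simp
        moreover have "0 \<le> \<bar>K0\<bar>" by simp
        ultimately show ?thesis using nn[of Empty] unfolding C_def Job age.simps by linarith
      qed
    qed
  qed
  moreover have "0 \<le> C" unfolding C_def using sum0 nn[of Empty] by simp
  ultimately show ?thesis using B0 by blast
qed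

lemma expect_le:
  assumes p: "0 \<le> p" "p \<le> 1" and q: "0 \<le> q" "q \<le> 1"
    and f: "\<And>s'. age s' \<le> Suc (age s) \<Longrightarrow> f s' \<le> M"
  shows "expect p q s c f \<le> M"
proof (cases s)
  case Empty
  have "(1-p)*f Empty \<le> (1-p)*M" using f[of Empty] p by (intro mult_left_mono) auto
  moreover have "p*f (Job 0) \<le> p*M" using f[of "Job 0"] p by (intro mult_left_mono) auto
  ultimately show ?thesis unfolding Empty expect_E by (simp add: algebra_simps)
next
  case (Job d)
  show ?thesis
  proof (cases "c = 0")
    case True then show ?thesis using f[of "Job (Suc d)"] Job by (simp add: expect_J0)
  next
    case False
    have "q*p*f (Job 0) \<le> q*p*M" using f[of "Job 0"] p q by (intro mult_left_mono) auto
    moreover have "q*(1-p)*f Empty \<le> q*(1-p)*M" using f[of Empty] p q by (intro mult_left_mono) auto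
    moreover have "(1-q)*f (Job (Suc d)) \<le> (1-q)*M" using f[of "Job (Suc d)"] Job q by (intro mult_left_mono) auto
    ultimately show ?thesis unfolding Job expect_J1[OF False] by (simp add: algebra_simps)
  qed
qed

lemma expect_diff: "expect p q s c f - expect p q s c g = expect p q s c (\<lambda>x. f x - g x)"
  by (cases s; cases "c = 0") (auto simp: expect_E expect_J0 expect_J1 algebra_simps)

lemma contraction_zero:
  fixes D :: "st \<Rightarrow> real"
  assumes p: "0 \<le> p" "p \<le> 1" and q: "0 \<le> q" "q \<le> 1" and b: "0 \<le> b" "b < 1"
    and D0: "\<And>s. 0 \<le> D s" and C: "0 \<le> C" and B: "0 \<le> B"
    and Dg: "\<And>s. D s \<le> C + B * real (age s)"
    and Dc: "\<And>s. D s \<le> b * expect p q s (\<pi> s) D"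
  shows "D s = 0"
proof -
  have it: "\<forall>s. D s \<le> b^n * (C + B * (real (age s) + real n))" for n
  proof (induction n)
    case 0 then show ?case using Dg by simp
  next
    case (Suc n)
    show ?case
    proof
      fix s
      have "expect p q s (\<pi> s) D \<le> b^n * (C + B * (real (age s) + 1 + real n))"
      proof (rule expect_le[OF p q])
        fix s' assume "age s' \<le> Suc (age s)"
        then have "B * (real (age s') + real n) \<le> B * (real (age s) + 1 + real n)"
          using B by (intro mult_left_mono) auto
        then have "b^n * (C + B * (real (age s') + real n)) \<le> b^n * (C + B * (real (age s) + 1 + real n))"
          using b by (intro mult_left_mono) auto
        then show "D s' \<le> b^n * (C + B * (real (age s) + 1 + real n))" using Suc.IH by (meson order_trans)
      qed
      then have "b * expect p q s (\<pi> s) D \<le> b * (b^n * (C + B * (real (age s) + 1 + real n)))"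
        using b by (intro mult_left_mono) auto
      then show "D s \<le> b ^ Suc n * (C + B * (real (age s) + real (Suc n)))"
        using Dc[of s] by (simp add: algebra_simps)
    qed
  qed
  have lim: "(\<lambda>n. b^n * (C + B * (real (age s) + real n))) \<longlonglongrightarrow> 0"
  proof -
    have e: "(\<lambda>n. b^n * (C + B * (real (age s) + real n))) = (\<lambda>n. (C + B * real (age s)) * b^n + B * (real n * b^n))"
      by (simp add: algebra_simps)
    have l1: "(\<lambda>n. b^n) \<longlonglongrightarrow> 0" using b by (intro LIMSEQ_power_zero) auto
    have l2: "(\<lambda>n. real n * b^n) \<longlonglongrightarrow> 0" using b by (intro powser_times_n_limit_0) auto
    have "(\<lambda>n. (C + B * real (age s)) * b^n + B * (real n * b^n)) \<longlonglongrightarrow> (C + B * real (age s))*0 + B*0"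
      by (intro tendsto_intros l1 l2)
    then show ?thesis unfolding e by simp
  qed
  have "D s \<le> 0" using LIMSEQ_le_const[OF lim] it by (meson order_refl)
  then show ?thesis using D0[of s] by simp
qed


definition Br :: "real \<Rightarrow> real \<Rightarrow> real \<Rightarrow> real \<Rightarrow> real \<Rightarrow> (st \<Rightarrow> real) \<Rightarrow> st \<Rightarrow> real" where
  "Br p q w lam b V s = (if s = Empty then Qr p q w lam b V s 0
      else min (Qr p q w lam b V s 0) (Qr p q w lam b V s 1))"

lemma expect_nonneg:
  assumes "0 \<le> p" "p \<le> 1" "0 \<le> q" "q \<le> 1" "\<And>s. 0 \<le> V s"
  shows "0 \<le> expect p q s c V"
  using assms by (cases s; cases "c = 0") (auto simp: expect_E expect_J0 expect_J1 intro!: add_nonneg_nonneg mult_nonneg_nonneg)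

lemma expect_enn_real:
  assumes "0 \<le> p" "p \<le> 1" "0 \<le> q" "q \<le> 1" "\<And>s. 0 \<le> V s"
  shows "expect_enn p q s c (\<lambda>s. ennreal (V s)) = ennreal (expect p q s c V)"
  using assms
  by (cases s; cases "c = 0")
     (auto simp: expect_E expect_J0 expect_J1 expect_enn_def ennreal_plus ennreal_mult
           intro!: add_nonneg_nonneg mult_nonneg_nonneg)

lemma Qr_nonneg:
  assumes "0 \<le> p" "p \<le> 1" "0 \<le> q" "q \<le> 1" "\<And>s. 0 \<le> V s" "0 \<le> w" "0 \<le> lam" "0 \<le> b"
  shows "0 \<le> Qr p q w lam b V s c"
  unfolding Qr_def cost_def using expect_nonneg[OF assms(1-5), of s c] assms(6-8)
  by (intro add_nonneg_nonneg mult_nonneg_nonneg) auto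

lemma bellman_real:
  assumes "0 \<le> p" "p \<le> 1" "0 \<le> q" "q \<le> 1" "\<And>s. 0 \<le> V s" "0 \<le> w" "0 \<le> lam" "0 \<le> b"
  shows "bellman p q w lam b (\<lambda>s. ennreal (V s)) s = ennreal (Br p q w lam b V s)"
proof -
  have e: "ennreal (cost w lam s c) + ennreal b * expect_enn p q s c (\<lambda>s. ennreal (V s))
       = ennreal (Qr p q w lam b V s c)" for c
  proof -
    have "0 \<le> cost w lam s c" unfolding cost_def using assms by simp
    moreover have "0 \<le> expect p q s c V" using expect_nonneg[OF assms(1-5)] by simp
    ultimately show ?thesis unfolding Qr_def expect_enn_real[OF assms(1-5)]
      using assms by (simp add: ennreal_plus ennreal_mult)
  qed
  show ?thesis unfolding bellman_def Let_def e Br_def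
    using Qr_nonneg[OF assms] by (simp add: min_ennreal)
qed

lemma mono_expect_enn: "V \<le> W \<Longrightarrow> expect_enn p q s c V \<le> expect_enn p q s c W"
  by (cases s; cases "c = 0") (auto simp: expect_enn_def le_fun_def intro!: add_mono mult_left_mono)

lemma mono_bellman: "mono (bellman p q w lam b)"
proof (rule monoI, rule le_funI)
  fix V W :: "st \<Rightarrow> ennreal" and s assume VW: "V \<le> W"
  have Q: "ennreal (cost w lam s c) + ennreal b * expect_enn p q s c V
        \<le> ennreal (cost w lam s c) + ennreal b * expect_enn p q s c W" for c
    using VW by (intro add_mono mult_left_mono mono_expect_enn) auto
  show "bellman p q w lam b V s \<le> bellman p q w lam b W s"
  proof (cases "s = Empty")
    case True show ?thesis unfolding bellman_def Let_def if_P[OF True] by (rule Q)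
  next
    case False show ?thesis unfolding bellman_def Let_def if_not_P[OF False]
      by (rule min.mono[OF Q[of 0] Q[of 1]])
  qed
qed

lemma lfp_mono_age:
  assumes w: "0 \<le> w"
  shows "lfp (bellman p q w lam b) (Job d) \<le> lfp (bellman p q w lam b) (Job (Suc d))"
proof -
  have "\<forall>d. lfp (bellman p q w lam b) (Job d) \<le> lfp (bellman p q w lam b) (Job (Suc d))"
  proof (induction rule: lfp_ordinal_induct[OF mono_bellman])
    case (1 S)
    show ?case
    proof
      fix d
      have Q: "ennreal (cost w lam (Job d) c) + ennreal b * expect_enn p q (Job d) c S
          \<le> ennreal (cost w lam (Job (Suc d)) c) + ennreal b * expect_enn p q (Job (Suc d)) c S" for c
      proof (intro add_mono mult_left_mono)
        show "ennreal (cost w lam (Job d) c) \<le> ennreal (cost w lam (Job (Suc d)) c)"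
          unfolding cost_def using w by (intro ennreal_leI) (simp add: mult_left_mono)
        show "expect_enn p q (Job d) c S \<le> expect_enn p q (Job (Suc d)) c S"
          using 1 by (cases "c = 0") (auto simp: expect_enn_def intro!: add_mono mult_left_mono)
      qed auto
      show "bellman p q w lam b S (Job d) \<le> bellman p q w lam b S (Job (Suc d))"
        using min.mono[OF Q[of 0] Q[of 1]] by (simp add: bellman_def Let_def)
    qed
  next
    case (2 M)
    show ?case
    proof
      fix d
      show "Sup M (Job d) \<le> Sup M (Job (Suc d))"
        unfolding Sup_apply using 2 by (intro SUP_mono) blast
    qed
  qed
  then show ?thesis by blast
qed


lemma Br_le_pol: "Br p q w lam b V s \<le> Qr p q w lam b V s (pol T s)"
  unfolding Br_def pol_def by (cases s) auto

lemma disc_structure: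
  assumes q: "0 < q" "q \<le> 1" and p: "0 < p" "p \<le> 1" and b: "0 < b" "b < 1"
    and w: "0 < w" and lam: "0 \<le> lam"
  shows "\<exists>T. (\<forall>s. disc_value p q w lam b s = ennreal (VT p q w lam b T s))
            \<and> (\<forall>T'. gT p q w lam b T \<le> gT p q w lam b T')
            \<and> (1 \<le> T \<longrightarrow> b*q*uinf q w lam b (gT p q w lam b T) T \<le> lam)"
proof -
  define f where "f = bellman p q w lam b"
  define U where "U = lfp f"
  have p': "0 \<le> p" "p \<le> 1" and q': "0 \<le> q" "q \<le> 1" using p q by auto
  have w': "0 \<le> w" and b': "0 \<le> b" using w b by auto
  have mf: "mono f" unfolding f_def by (rule mono_bellman)
  have fixU: "U = f U" unfolding U_def by (rule lfp_unfold[OF mf])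
  have VTnn: "\<And>T s. 0 \<le> VT p q w lam b T s" using VT_nonneg[OF q p b w' lam] by blast
  have le: "U s \<le> ennreal (VT p q w lam b T s)" for T s
  proof -
    have "f (\<lambda>s. ennreal (VT p q w lam b T s)) \<le> (\<lambda>s. ennreal (VT p q w lam b T s))"
    proof (rule le_funI)
      fix s
      have "f (\<lambda>s. ennreal (VT p q w lam b T s)) s = ennreal (Br p q w lam b (VT p q w lam b T) s)"
        unfolding f_def by (rule bellman_real[OF p' q' VTnn w' lam b'])
      also have "\<dots> \<le> ennreal (Qr p q w lam b (VT p q w lam b T) s (pol T s))"
        by (intro ennreal_leI Br_le_pol)
      also have "\<dots> = ennreal (VT p q w lam b T s)" using policy_eq[OF q p b] by simp
      finally show "f (\<lambda>s. ennreal (VT p q w lam b T s)) s \<le> ennreal (VT p q w lam b T s)" .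
    qed
    then have "U \<le> (\<lambda>s. ennreal (VT p q w lam b T s))" unfolding U_def by (rule lfp_lowerbound)
    then show ?thesis by (simp add: le_fun_def)
  qed
  have fin: "U s \<noteq> top" for s using le[of s 0] by (metis ennreal_neq_top neq_top_trans)
  define u where "u s = enn2real (U s)" for s
  have Uu: "U = (\<lambda>s. ennreal (u s))" unfolding u_def using fin by (simp add: fun_eq_iff ennreal_enn2real_if)
  have u0: "0 \<le> u s" for s unfolding u_def by simp
  have ueq: "u s = Br p q w lam b u s" for s
  proof -
    have "ennreal (u s) = f (\<lambda>s. ennreal (u s)) s" using fixU Uu by (metis)
    also have "\<dots> = ennreal (Br p q w lam b u s)"
      unfolding f_def by (rule bellman_real[OF p' q' u0 w' lam b'])
    finally show ?thesis
      using u0[of s] Br_def Qr_nonneg[OF p' q' u0 w' lam b'] by (simp add: ennreal_inj)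
  qed
  have umono1: "u (Job d) \<le> u (Job (Suc d))" for d
    unfolding u_def U_def f_def using lfp_mono_age[OF w', of p q lam b d] fin
    unfolding U_def f_def by (simp add: enn2real_mono less_top)
  have umono: "d \<le> d' \<Longrightarrow> u (Job d) \<le> u (Job d')" for d d'
    using lift_Suc_mono_le[of "\<lambda>d. u (Job d)", OF umono1] by blast
  define Zu where "Zu = p*u (Job 0) + (1-p)*u Empty"
  have Q0: "Qr p q w lam b u (Job d) 0 = w*real d + b*u (Job (Suc d))" for d
    by (simp add: Qr_def cost_def expect_J0)
  have Q1: "Qr p q w lam b u (Job d) 1 = w*real d + lam + b*(q*p*u (Job 0) + q*(1-p)*u Empty + (1-q)*u (Job (Suc d)))" for d
    by (simp add: Qr_def cost_def expect_J1)
  have Qdiff: "Qr p q w lam b u (Job d) 1 - Qr p q w lam b u (Job d) 0 = lam + b*q*Zu - b*q*u (Job (Suc d))" for d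
    unfolding Q0 Q1 Zu_def by (simp add: algebra_simps)
  have ulow: "w*real d \<le> u (Job d)" for d
  proof -
    have "0 \<le> b*u (Job (Suc d))" using b' u0 by simp
    moreover have "0 \<le> b*(q*p*u (Job 0) + q*(1-p)*u Empty + (1-q)*u (Job (Suc d)))"
      using b' u0 p q by (intro mult_nonneg_nonneg add_nonneg_nonneg) auto
    ultimately show ?thesis using ueq[of "Job d"] lam unfolding Br_def Q0 Q1 by simp
  qed
  define P where "P d \<longleftrightarrow> lam + b*q*Zu < b*q*u (Job (Suc d))" for d
  have exP: "\<exists>d. P d"
  proof -
    have bqw: "0 < b*q*w" using b q w by simp
    obtain n where n: "(lam + b*q*Zu)/(b*q*w) < real n" using reals_Archimedean2 by blast
    have "lam + b*q*Zu < b*q*w*real n" using n bqw by (simp add: field_simps)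
    also have "\<dots> \<le> b*q*(w*real (Suc n))" using bqw by (simp add: algebra_simps)
    also have "\<dots> \<le> b*q*u (Job (Suc n))" using ulow[of "Suc n"] b q by (intro mult_left_mono) auto
    finally show ?thesis unfolding P_def by blast
  qed
  define T where "T = (LEAST d. P d)"
  have PT: "P T" unfolding T_def using exP by (rule LeastI_ex)
  have notP: "d < T \<Longrightarrow> \<not> P d" for d unfolding T_def by (rule not_less_Least)
  have upol: "u s = Qr p q w lam b u s (pol T s)" for s
  proof (cases s)
    case Empty then show ?thesis using ueq[of s] by (simp add: Br_def pol_def)
  next
    case (Job d)
    show ?thesis
    proof (cases "T \<le> d")
      case True
      have "b*q*u (Job (Suc T)) \<le> b*q*u (Job (Suc d))" using umono[of "Suc T" "Suc d"] True b q
        by (intro mult_left_mono) auto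
      then have "Qr p q w lam b u (Job d) 1 < Qr p q w lam b u (Job d) 0"
        using PT Qdiff[of d] unfolding P_def by linarith
      then show ?thesis using ueq[of s] Job True by (simp add: Br_def pol_def)
    next
      case False
      then have "Qr p q w lam b u (Job d) 0 \<le> Qr p q w lam b u (Job d) 1"
        using notP[of d] Qdiff[of d] unfolding P_def by linarith
      then show ?thesis using ueq[of s] Job False by (simp add: Br_def pol_def)
    qed
  qed
  define D where "D s = VT p q w lam b T s - u s" for s
  have uleV: "u s \<le> VT p q w lam b T s" for s
    using le[of s T] Uu VTnn by (simp add: ennreal_le_iff)
  have D0: "0 \<le> D s" for s using uleV[of s] unfolding D_def by simp
  obtain C B where CB: "0 \<le> C" "0 \<le> B" "\<And>s. VT p q w lam b T s \<le> C + B * real (age s)"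
    using VT_growth[OF q p b w' lam, of T] by blast
  have Dg: "D s \<le> C + B * real (age s)" for s using CB(3)[of s] u0[of s] unfolding D_def by simp
  have Dc: "D s \<le> b * expect p q s (pol T s) D" for s
  proof -
    have "D s = Qr p q w lam b (VT p q w lam b T) s (pol T s) - Qr p q w lam b u s (pol T s)"
      unfolding D_def using policy_eq[OF q p b] upol by metis
    also have "\<dots> = b * expect p q s (pol T s) D"
      unfolding Qr_def D_def by (simp add: right_diff_distrib[symmetric] expect_diff)
    finally show ?thesis by simp
  qed
  have DZ: "D s = 0" for s
    by (rule contraction_zero[OF p' q' b' b(2) D0 CB(1) CB(2) Dg Dc])
  have uV: "u s = VT p q w lam b T s" for s using DZ[of s] unfolding D_def by simp
  have part1: "\<forall>s. disc_value p q w lam b s = ennreal (VT p q w lam b T s)"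
    using Uu uV unfolding disc_value_def U_def f_def by (metis)
  have uleV': "u s \<le> VT p q w lam b T' s" for s T'
    using le[of s T'] Uu VTnn by (simp add: ennreal_le_iff)
  have part2: "\<forall>T'. gT p q w lam b T \<le> gT p q w lam b T'"
  proof
    fix T'
    have "b*(gT p q w lam b T/(1-b)) \<le> b*(gT p q w lam b T'/(1-b))"
      using uV[of Empty] uleV'[of Empty T'] unfolding VT_E by simp
    then show "gT p q w lam b T \<le> gT p q w lam b T'"
      using b by (simp add: divide_le_cancel mult_le_cancel_left_pos)
  qed
  have part3: "1 \<le> T \<longrightarrow> b*q*uinf q w lam b (gT p q w lam b T) T \<le> lam"
  proof
    assume T1: "1 \<le> T"
    define g where "g = gT p q w lam b T"
    define Z where "Z = g/(1-b)"
    have gZ: "g = (1-b)*Z" unfolding Z_def using b by simp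
    have cons: "(1-p)*g = p*uT q w lam b g T 0" unfolding g_def using consist[of q b p w lam T] q p b by simp
    have np: "\<not> P (T - 1)" using notP[of "T-1"] T1 by simp
    have uT': "u (Job T) = uinf q w lam b g T + Z"
      using uV[of "Job T"] unfolding VT_J g_def[symmetric] Z_def[symmetric] uT_def by simp
    have Zu': "Zu = p*(uT q w lam b g T 0 + Z) + (1-p)*(b*Z)"
      unfolding Zu_def using uV[of "Job 0"] uV[of Empty]
      unfolding VT_J VT_E g_def[symmetric] Z_def[symmetric] by simp
    have "Zu = Z + (p*uT q w lam b g T 0 - (1-p)*((1-b)*Z))" unfolding Zu' by (simp add: algebra_simps)
    also have "\<dots> = Z" using cons gZ by simp
    finally have ZZ: "Zu = Z" .
    have "b*q*u (Job T) \<le> lam + b*q*Zu" using np T1 unfolding P_def by simp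
    then show "b*q*uinf q w lam b (gT p q w lam b T) T \<le> lam"
      unfolding uT' ZZ g_def[symmetric] by (simp add: algebra_simps)
  qed
  show ?thesis using part1 part2 part3 by blast
qed


definition FF :: "real \<Rightarrow> real \<Rightarrow> real \<Rightarrow> real \<Rightarrow> real \<Rightarrow> nat \<Rightarrow> nat \<Rightarrow> real" where
  "FF p q w lam b T d = uT q w lam b (gT p q w lam b T) T d + gT p q w lam b T"

lemma VT_diff: "b < 1 \<Longrightarrow> VT p q w lam b T (Job d) - VT p q w lam b T Empty = FF p q w lam b T d"
  unfolding VT_J VT_E FF_def
proof -
  assume b: "b < 1"
  define g where "g = gT p q w lam b T"
  have "g/(1-b) - b*(g/(1-b)) = (1-b)*(g/(1-b))" by (simp only: left_diff_distrib mult_1)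
  also have "\<dots> = g" using b by simp
  finally have "g/(1-b) - b*(g/(1-b)) = g" .
  then show "uT q w lam b (gT p q w lam b T) T d + gT p q w lam b T / (1 - b) - b * (gT p q w lam b T / (1 - b)) =
    uT q w lam b (gT p q w lam b T) T d + gT p q w lam b T" unfolding g_def by simp
qed

lemma isCont_AT: "0 < q \<Longrightarrow> isCont (\<lambda>b. AT q w lam b T) 1"
  unfolding AT_def cc_def by (intro continuous_intros) auto

lemma isCont_BT: "0 < q \<Longrightarrow> isCont (\<lambda>b. BT q b T) 1"
  unfolding BT_def cc_def by (intro continuous_intros) auto

lemma isCont_gT: "0 < q \<Longrightarrow> q \<le> 1 \<Longrightarrow> 0 < p \<Longrightarrow> p \<le> 1 \<Longrightarrow> isCont (\<lambda>b. gT p q w lam b T) 1"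
  unfolding gT_def using den_pos[of q 1 p T]
  by (intro continuous_intros isCont_AT isCont_BT) auto

lemma isCont_FF: assumes "0 < q" "q \<le> 1" "0 < p" "p \<le> 1"
  shows "isCont (\<lambda>b. FF p q w lam b T d) 1"
proof -
  have g: "isCont (\<lambda>b. gT p q w lam b T) 1" using isCont_gT assms by blast
  have ui: "isCont (\<lambda>b. uinf q w lam b (gT p q w lam b T) k) 1" for k
    unfolding uinf_def cc_def using assms by (intro continuous_intros g) auto
  show ?thesis unfolding FF_def uT_def
    by (cases "T \<le> d") (simp_all, (intro continuous_intros ui g)+)
qed

lemma isCont_at_left: "isCont f (1::real) \<Longrightarrow> (f \<longlongrightarrow> f 1) (at_left 1)"
  unfolding isCont_def by (rule tendsto_mono[OF at_le]) auto


definition aa :: "real \<Rightarrow> real \<Rightarrow> nat \<Rightarrow> real" where "aa q w d = w*(real d + 1/q)"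

lemma AT1_Suc: "0 < q \<Longrightarrow> AT q w lam 1 (Suc T) = AT q w lam 1 T + aa q w T"
  unfolding AT_def aa_def cc_def by (simp add: add_divide_distrib algebra_simps)

lemma BT1_Suc: "BT q 1 (Suc T) = BT q 1 T + 1"
  unfolding BT_def by simp

lemma g1_rec:
  assumes q: "0 < q" "q \<le> 1" and p: "0 < p" "p \<le> 1"
  shows "gT p q w lam 1 (Suc T) - gT p q w lam 1 T
           = p*(aa q w T - gT p q w lam 1 T)/(1 - p + p*BT q 1 T + p)
      \<and> gT p q w lam 1 (Suc T) - aa q w T
           = (1 - p + p*BT q 1 T)*(gT p q w lam 1 T - aa q w T)/(1 - p + p*BT q 1 T + p)"
proof -
  define Dn where "Dn = 1 - p + p*BT q 1 T"
  define A where "A = AT q w lam 1 T"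
  define a where "a = aa q w T"
  have D: "0 < Dn" unfolding Dn_def using den_pos[of q 1 p T] q p by simp
  have g: "gT p q w lam 1 T = p*A/Dn" unfolding gT_def Dn_def A_def by simp
  have g': "gT p q w lam 1 (Suc T) = p*(A + a)/(Dn + p)"
    unfolding gT_def Dn_def A_def a_def AT1_Suc[OF q(1)] BT1_Suc by (simp add: algebra_simps)
  have Dp: "0 < Dn + p" using D p by simp
  have e1: "p*(A + a)/(Dn + p) - p*A/Dn = p*(a - p*A/Dn)/(Dn + p)"
    using D Dp by (simp add: field_simps)
  have e2: "p*(A + a)/(Dn + p) - a = Dn*(p*A/Dn - a)/(Dn + p)"
  proof -
    have x: "Dn*(p*A/Dn - a) = p*A - Dn*a" using D by (simp add: right_diff_distrib)
    have "p*(A + a)/(Dn + p) - a = (p*(A + a) - a*(Dn + p))/(Dn + p)"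
      using Dp by (simp add: diff_divide_distrib)
    also have "p*(A + a) - a*(Dn + p) = p*A - Dn*a" by (simp add: algebra_simps)
    finally show ?thesis unfolding x .
  qed
  show ?thesis unfolding g g' using e1 e2 unfolding Dn_def a_def by simp
qed

lemma g1_step:
  assumes q: "0 < q" "q \<le> 1" and p: "0 < p" "p \<le> 1"
  shows "(gT p q w lam 1 T \<le> gT p q w lam 1 (Suc T) \<longleftrightarrow> gT p q w lam 1 T \<le> aa q w T)
      \<and> (gT p q w lam 1 (Suc T) \<le> gT p q w lam 1 T \<longleftrightarrow> aa q w T \<le> gT p q w lam 1 T)
      \<and> (aa q w T \<le> gT p q w lam 1 (Suc T) \<longleftrightarrow> aa q w T \<le> gT p q w lam 1 T)"
proof -
  define Dn where "Dn = 1 - p + p*BT q 1 T"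
  have D: "0 < Dn" unfolding Dn_def using den_pos[of q 1 p T] q p by simp
  have Dp: "0 < Dn + p" using D p by simp
  note r = g1_rec[OF q p, of w lam T, folded Dn_def]
  have s1: "0 \<le> gT p q w lam 1 (Suc T) - gT p q w lam 1 T \<longleftrightarrow> 0 \<le> aa q w T - gT p q w lam 1 T"
    unfolding r[THEN conjunct1] using Dp p by (simp add: zero_le_divide_iff zero_le_mult_iff)
  have s2: "gT p q w lam 1 (Suc T) - gT p q w lam 1 T \<le> 0 \<longleftrightarrow> aa q w T - gT p q w lam 1 T \<le> 0"
    unfolding r[THEN conjunct1] using Dp p by (simp add: divide_le_0_iff mult_le_0_iff)
  have s3: "0 \<le> gT p q w lam 1 (Suc T) - aa q w T \<longleftrightarrow> 0 \<le> gT p q w lam 1 T - aa q w T"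
    unfolding r[THEN conjunct2] using Dp D by (simp add: zero_le_divide_iff zero_le_mult_iff)
  show ?thesis using s1 s2 s3 by linarith
qed


definition opt :: "real \<Rightarrow> real \<Rightarrow> real \<Rightarrow> real \<Rightarrow> nat \<Rightarrow> bool" where
  "opt p q w lam T \<longleftrightarrow> (\<forall>T'. gT p q w lam 1 T \<le> gT p q w lam 1 T')"

lemma opt_le:
  assumes q: "0 < q" "q \<le> 1" and p: "0 < p" "p \<le> 1" and o: "opt p q w lam T"
  shows "gT p q w lam 1 T \<le> aa q w T"
  using o g1_step[OF q p, of w lam T] unfolding opt_def by blast

lemma opt_ge:
  assumes q: "0 < q" "q \<le> 1" and p: "0 < p" "p \<le> 1" and o: "opt p q w lam T" and T: "1 \<le> T"
  shows "aa q w (T - 1) \<le> gT p q w lam 1 T"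
proof -
  obtain S where S: "T = Suc S" using T by (cases T) auto
  have "gT p q w lam 1 (Suc S) \<le> gT p q w lam 1 S" using o S unfolding opt_def by blast
  then show ?thesis using g1_step[OF q p, of w lam S] S by simp
qed

lemma aa_less: "0 < w \<Longrightarrow> d < d' \<Longrightarrow> aa q w d < aa q w d'"
  unfolding aa_def by simp

lemma tie_u:
  assumes q: "0 < q" and g: "g = aa q w T"
  shows "uT q w lam 1 g (Suc T) d = uT q w lam 1 g T d"
proof -
  have c: "cc q 1 = q" unfolding cc_def by simp
  have ui: "uinf q w lam 1 g (Suc T) = uinf q w lam 1 g T + w/q"
    unfolding uinf_def c using q by (simp add: field_simps)
  show ?thesis
  proof (cases "Suc T \<le> d")
    case True then show ?thesis unfolding uT_def by simp
  next
    case False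
    then have dT: "d \<le> T" by simp
    have "uT q w lam 1 g (Suc T) d = (\<Sum>k<Suc (T-d). w*real(d+k) - g) + uinf q w lam 1 g (Suc T)"
      using uT_le[of d "Suc T" q w lam 1 g] dT by (simp add: Suc_diff_le)
    also have "\<dots> = (\<Sum>k<T-d. w*real(d+k) - g) + (w*real T - g) + uinf q w lam 1 g T + w/q"
      using dT unfolding ui by simp
    also have "(w*real T - g) + w/q = 0" unfolding g aa_def by (simp add: algebra_simps)
    then have "(\<Sum>k<T-d. w*real(d+k) - g) + (w*real T - g) + uinf q w lam 1 g T + w/q
         = (\<Sum>k<T-d. w*real(d+k) - g) + uinf q w lam 1 g T" by simp
    also have "\<dots> = uT q w lam 1 g T d" using uT_le[of d T q w lam 1 g] dT by simp
    finally show ?thesis .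
  qed
qed

lemma opt_FF:
  assumes q: "0 < q" "q \<le> 1" and p: "0 < p" "p \<le> 1" and w: "0 < w"
    and o1: "opt p q w lam T1" and o2: "opt p q w lam T2"
  shows "FF p q w lam 1 T1 d = FF p q w lam 1 T2 d"
proof -
  have gg: "gT p q w lam 1 T1 = gT p q w lam 1 T2"
    using o1 o2 unfolding opt_def by (meson order_antisym)
  have main: "FF p q w lam 1 S1 d = FF p q w lam 1 S2 d"
    if o1: "opt p q w lam S1" and o2: "opt p q w lam S2" and lt: "S1 < S2" for S1 S2
  proof -
    have gg: "gT p q w lam 1 S1 = gT p q w lam 1 S2"
      using o1 o2 unfolding opt_def by (meson order_antisym)
    have u1: "gT p q w lam 1 S1 \<le> aa q w S1" by (rule opt_le[OF q p o1])
    have u2: "aa q w (S2 - 1) \<le> gT p q w lam 1 S2" using opt_ge[OF q p o2] lt by simp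
    have "\<not> S1 < S2 - 1" using aa_less[OF w, of S1 "S2 - 1" q] u1 u2 gg by linarith
    then have S2: "S2 = Suc S1" using lt by simp
    have ga: "gT p q w lam 1 S1 = aa q w S1" using u1 u2 gg S2 by simp
    have gs: "gT p q w lam 1 (Suc S1) = gT p q w lam 1 S1" using gg S2 by simp
    show ?thesis unfolding S2 FF_def gs using tie_u[OF q(1) ga, of lam d] by simp
  qed
  show ?thesis
  proof (cases T1 T2 rule: linorder_cases)
    case less then show ?thesis using main o1 o2 by blast
  next
    case equal then show ?thesis by simp
  next
    case greater then show ?thesis using main o1 o2 by metis
  qed
qed

lemma opt_passive:
  assumes q: "0 < q" "q \<le> 1" and p: "0 < p" "p \<le> 1" and w: "0 < w" and o: "opt p q w lam T"
  shows "q * uT q w lam 1 (gT p q w lam 1 T) T (Suc d) \<le> lam \<longleftrightarrow> aa q w d \<le> gT p q w lam 1 T"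
proof -
  define g where "g = gT p q w lam 1 T"
  have c: "cc q 1 = q" unfolding cc_def by simp
  have qui: "q * uinf q w lam 1 g k = aa q w (k - 1) + lam - g" if "1 \<le> k" for k
  proof -
    have "q * uinf q w lam 1 g k = w*real k + lam - g + w*(1-q)/q"
      unfolding uinf_def c using q by (simp add: field_simps power2_eq_square)
    also have "\<dots> = aa q w (k - 1) + lam - g" unfolding aa_def using that q
      by (simp add: of_nat_diff field_simps)
    finally show ?thesis .
  qed
  show ?thesis
  proof (cases "T \<le> Suc d")
    case True
    then have "q * uT q w lam 1 g T (Suc d) = aa q w d + lam - g"
      unfolding uT_def using qui[of "Suc d"] by simp
    then show ?thesis unfolding g_def by simp
  next
    case False
    then have T1: "1 \<le> T" by simp
    have ge: "aa q w (T - 1) \<le> g" unfolding g_def by (rule opt_ge[OF q p o T1])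
    have "aa q w d < aa q w (T - 1)" using False by (intro aa_less[OF w]) auto
    then have r: "aa q w d \<le> g" using ge by simp
    have terms: "w*real (Suc d + k) - g \<le> 0" if "k < T - Suc d" for k
    proof -
      have "w*real (Suc d + k) \<le> w*real (T - 1)" using that w by (intro mult_left_mono) auto
      also have "\<dots> \<le> aa q w (T - 1)" unfolding aa_def using w q by simp
      finally show ?thesis using ge by simp
    qed
    have "uT q w lam 1 g T (Suc d) = (\<Sum>k<T - Suc d. w*real (Suc d + k) - g) + uinf q w lam 1 g T"
      using uT_le[of "Suc d" T q w lam 1 g] False by simp
    also have "\<dots> \<le> uinf q w lam 1 g T"
    proof -
      have "(\<Sum>k<T - Suc d. w*real (Suc d + k) - g) \<le> 0"
      proof (rule sum_nonpos)
        fix k assume "k \<in> {..<T - Suc d}"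
        then show "w*real (Suc d + k) - g \<le> 0" using terms[of k] by simp
      qed
      then show ?thesis by simp
    qed
    finally have "q * uT q w lam 1 g T (Suc d) \<le> q * uinf q w lam 1 g T"
      using q by (simp add: mult_left_mono)
    also have "\<dots> \<le> lam" using qui[OF T1] ge by simp
    finally show ?thesis using r unfolding g_def by simp
  qed
qed


lemma AT1_lower:
  assumes q: "0 < q" "q \<le> 1" and w: "0 \<le> w" and lam: "0 \<le> lam"
  shows "w*real T*(real T + 1)/2 + lam/q \<le> AT q w lam 1 T"
proof (induction T)
  case 0
  have "0 \<le> w*(1*(1-q))/(cc q 1)^2" using q w by simp
  then show ?case unfolding AT_def cc_def by simp
next
  case (Suc T)
  have "w*1 \<le> w*(1/q)" using q w by (intro mult_left_mono) auto
  then have "w*real (Suc T)*(real (Suc T) + 1)/2 + lam/q \<le> w*real T*(real T + 1)/2 + lam/q + aa q w T"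
    unfolding aa_def by (simp add: algebra_simps add_divide_distrib)
  then show ?case using Suc.IH unfolding AT1_Suc[OF q(1)] by simp
qed

lemma BT1: "BT q 1 T = real T + 1/q"
  unfolding BT_def cc_def by simp

lemma g1_lower:
  assumes q: "0 < q" "q \<le> 1" and p: "0 < p" "p \<le> 1" and w: "0 \<le> w" and lam: "0 \<le> lam"
  shows "p*(w*real T*(real T + 1)/2 + lam/q) \<le> gT p q w lam 1 T * (real T + 1/q)"
proof -
  define A where "A = AT q w lam 1 T"
  define Dn where "Dn = 1 - p + p*(real T + 1/q)"
  have D: "0 < Dn" unfolding Dn_def using den_pos[of q 1 p T] q p unfolding BT1 by simp
  have e: "real T + 1/q - Dn = (1-p)*(1/q - 1) + (1-p)*real T" unfolding Dn_def using q by (simp add: field_simps)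
  have "1 \<le> 1/q" using q by (simp add: le_divide_eq)
  then have "0 \<le> (1-p)*(1/q - 1)" using p by simp
  moreover have "(1-p)*real T \<ge> 0" using p by simp
  ultimately have DT: "Dn \<le> real T + 1/q" using e by linarith
  have A0: "0 \<le> A" unfolding A_def using AT_nonneg[of q 1 w lam T] q w lam by simp
  have g: "gT p q w lam 1 T = p*A/Dn" unfolding gT_def A_def Dn_def BT1 by simp
  have "p*A \<le> p*A/Dn * (real T + 1/q)"
  proof -
    have "p*A = p*A/Dn*Dn" using D by simp
    also have "\<dots> \<le> p*A/Dn * (real T + 1/q)" using DT D A0 p by (intro mult_left_mono) auto
    finally show ?thesis .
  qed
  moreover have "p*(w*real T*(real T + 1)/2 + lam/q) \<le> p*A"
    unfolding A_def using AT1_lower[OF q w lam, of T] p by (intro mult_left_mono) auto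
  ultimately show ?thesis unfolding g by linarith
qed

lemma g1_lower_lin:
  assumes q: "0 < q" "q \<le> 1" and p: "0 < p" "p \<le> 1" and w: "0 \<le> w" and lam: "0 \<le> lam"
  shows "p*q*w*real T/2 \<le> gT p q w lam 1 T"
proof -
  define g where "g = gT p q w lam 1 T"
  have h: "p*(w*real T*(real T + 1)/2 + lam/q) \<le> g * (real T + 1/q)"
    unfolding g_def by (rule g1_lower[OF q p w lam])
  have "p*q*w*real T/2 * (real T + 1/q) = p*w*real T*(q*real T + 1)/2"
    using q by (simp add: field_simps)
  also have "\<dots> \<le> p*w*real T*(real T + 1)/2"
    using q p w by (intro divide_right_mono mult_left_mono) (auto simp: mult_left_le_one_le)
  also have "\<dots> \<le> p*(w*real T*(real T + 1)/2 + lam/q)"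
    using p q lam by (simp add: algebra_simps)
  finally have "p*q*w*real T/2 * (real T + 1/q) \<le> g * (real T + 1/q)" using h by linarith
  moreover have "0 < real T + 1/q" using q by (simp add: add_nonneg_pos)
  ultimately show ?thesis unfolding g_def by simp
qed

lemma opt_exists:
  assumes q: "0 < q" "q \<le> 1" and p: "0 < p" "p \<le> 1" and w: "0 < w" and lam: "0 \<le> lam"
  shows "\<exists>T. opt p q w lam T"
proof -
  define g where "g T = gT p q w lam 1 T" for T
  define M where "M = nat \<lceil>2 * g 0/(p*q*w)\<rceil>"
  have pqw: "0 < p*q*w" using p q w by simp
  have big: "g 0 \<le> g T" if "M \<le> T" for T
  proof -
    have "2 * g 0/(p*q*w) \<le> real M" unfolding M_def by linarith
    also have "\<dots> \<le> real T" using that by simp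
    finally have "2 * g 0 \<le> p*q*w*real T" using pqw by (simp add: field_simps)
    then show ?thesis using g1_lower_lin[OF q p less_imp_le[OF w] lam, of T] unfolding g_def by simp
  qed
  define m where "m = Min (g ` {..M})"
  have "m \<in> g ` {..M}" unfolding m_def by (intro Min_in) auto
  then obtain T0 where T0: "T0 \<le> M" "g T0 = m" by auto
  have "g T0 \<le> g T" for T
  proof (cases "T \<le> M")
    case True
    have "m \<le> g T" unfolding m_def using True by (intro Min_le) auto
    then show ?thesis using T0 by simp
  next
    case False
    have "m \<le> g 0" unfolding m_def by (intro Min_le) auto
    then show ?thesis using big[of T] False T0 by simp
  qed
  then show ?thesis unfolding opt_def g_def by blast
qed

lemma gT0_bound:
  assumes q: "0 < q" "q \<le> 1" and p: "0 < p" "p \<le> 1" and b: "0 < b" "b \<le> 1"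
    and w: "0 \<le> w" and lam: "0 \<le> lam"
  shows "gT p q w lam b 0 \<le> lam + w/q"
proof -
  define c where "c = cc q b"
  have c: "0 < c" "q \<le> c" "c \<le> 1" unfolding c_def using cc_pos[of q b] cc_ge[of q b] cc_le1[of q b] q b by auto
  define A where "A = lam/c + w*(b*(1-q))/c^2"
  have A: "AT q w lam b 0 = A" unfolding AT_def A_def c_def by simp
  have B: "BT q b 0 = 1/c" unfolding BT_def c_def by simp
  have A0: "0 \<le> A" unfolding A_def using c lam w q b by simp
  have Dn: "p/c \<le> 1 - p + p*(1/c)" using p by simp
  have pc: "0 < p/c" using p c by simp
  have "gT p q w lam b 0 = p*A/(1 - p + p*(1/c))" unfolding gT_def A B by simp
  also have "\<dots> \<le> p*A/(p/c)"
  proof -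
    have D1: "0 < 1 - p + p*(1/c)" using Dn pc by linarith
    have "0 < (1 - p + p*(1/c)) * (p/c)" by (rule mult_pos_pos[OF D1 pc])
    then show ?thesis using Dn A0 p by (intro divide_left_mono) auto
  qed
  also have "\<dots> = c*A" using p c by simp
  also have "\<dots> = lam + w*(b*(1-q))/c" unfolding A_def using c by (simp add: field_simps power2_eq_square)
  also have "w*(b*(1-q))/c \<le> w/q"
  proof -
    have "b*(1-q) \<le> 1" using b q by (simp add: mult_le_one)
    then have "w*(b*(1-q)) \<le> w" using w by (simp add: mult_left_le)
    then have "w*(b*(1-q))/c \<le> w/c" using c by (simp add: divide_right_mono)
    also have "\<dots> \<le> w/q" using c q w by (simp add: divide_left_mono)
    finally show ?thesis .
  qed
  finally show ?thesis by simp
qed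

lemma T_bound:
  assumes q: "0 < q" "q \<le> 1" and p: "0 < p" "p \<le> 1" and b: "1/2 < b" "b < 1"
    and w: "0 < w" and lam: "0 \<le> lam"
    and mn: "\<forall>T'. gT p q w lam b T \<le> gT p q w lam b T'"
    and th: "1 \<le> T \<longrightarrow> b*q*uinf q w lam b (gT p q w lam b T) T \<le> lam"
  shows "w * real T \<le> w/q + 2*lam/q"
proof -
  define g where "g = gT p q w lam b T"
  have b': "0 < b" "b \<le> 1" using b by auto
  have gb: "g \<le> lam + w/q" unfolding g_def using mn gT0_bound[OF q p b' _ lam, of w] w by (meson less_imp_le order_trans)
  have lq: "0 \<le> lam/q" "0 \<le> 2*lam/q" using lam q by simp_all
  show ?thesis
  proof (cases "T = 0")
    case True then show ?thesis using lq w q by simp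
  next
    case False
    then have T1: "1 \<le> T" by simp
    define c where "c = cc q b"
    have c: "0 < c" "c \<le> 1" unfolding c_def using cc_pos[of q b] cc_le1[of q b] q b' by auto
    define y where "y = w*real T + lam - g"
    show ?thesis
    proof (cases "y \<le> 0")
      case True then show ?thesis using gb lq unfolding y_def by linarith
    next
      case False
      have "y \<le> y/c" using c False by (simp add: le_divide_eq)
      also have "y/c \<le> uinf q w lam b g T"
        unfolding uinf_def y_def[symmetric] c_def[symmetric] using w b' q c by simp
      finally have yu: "y \<le> uinf q w lam b g T" .
      have "b*q*y \<le> b*q*uinf q w lam b g T" using yu b q by (simp add: mult_left_mono)
      also have "\<dots> \<le> lam" using th T1 unfolding g_def by simp
      finally have "b*q*y \<le> lam" .
      moreover have "q*y/2 \<le> b*q*y" using b q False by (simp add: mult_right_mono)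
      ultimately have "q*y \<le> 2*lam" by linarith
      then have "y \<le> 2*lam/q" using q by (simp add: le_divide_eq mult.commute)
      then show ?thesis using gb unfolding y_def by (simp add: add_divide_distrib)
    qed
  qed
qed


lemma rel_value_E: "rel_value p q w lam Empty = 0"
proof -
  have "((\<lambda>b::real. 0::real) \<longlongrightarrow> 0) (at_left 1)" by simp
  then show ?thesis unfolding rel_value_def by (simp add: tendsto_Lim[OF trivial_limit_at_left_real])
qed

lemma rel_value_J:
  assumes q: "0 < q" "q \<le> 1" and p: "0 < p" "p \<le> 1" and w: "0 < w" and lam: "0 \<le> lam"
    and o: "opt p q w lam T0"
  shows "rel_value p q w lam (Job d) = FF p q w lam 1 T0 d"
proof -
  define fb where "fb b = enn2real (disc_value p q w lam b (Job d)) - enn2real (disc_value p q w lam b Empty)" for b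
  define H where "H = FF p q w lam 1 T0 d"
  have "(fb \<longlongrightarrow> H) (at_left 1)"
  proof (rule tendstoI)
    fix e :: real assume e: "0 < e"
    define K where "K = w/q + 2*lam/q"
    define S where "S = {T. w * real T \<le> K}"
    have finS: "finite S"
    proof (rule finite_subset)
      show "S \<subseteq> {..nat \<lceil>K/w\<rceil>}"
      proof
        fix T assume "T \<in> S"
        then have "real T \<le> K/w" unfolding S_def using w by (simp add: le_divide_eq mult.commute)
        then show "T \<in> {..nat \<lceil>K/w\<rceil>}" by (simp add: le_nat_iff) linarith
      qed
    qed simp
    have ev1: "eventually (\<lambda>b. b \<in> {1/2<..<(1::real)}) (at_left 1)"
      by (rule eventually_at_leftI[of "1/2"]) auto
    have ev2: "\<forall>T\<in>S - {T. opt p q w lam T}. eventually (\<lambda>b. gT p q w lam b T0 < gT p q w lam b T) (at_left 1)"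
    proof
      fix T assume T: "T \<in> S - {T. opt p q w lam T}"
      then have "\<not> (\<forall>T'. gT p q w lam 1 T \<le> gT p q w lam 1 T')" unfolding opt_def by blast
      then obtain T' where "gT p q w lam 1 T' < gT p q w lam 1 T" by (meson not_le)
      then have lt: "gT p q w lam 1 T0 < gT p q w lam 1 T" using o unfolding opt_def by (meson le_less_trans)
      have "((\<lambda>b. gT p q w lam b T - gT p q w lam b T0) \<longlongrightarrow> gT p q w lam 1 T - gT p q w lam 1 T0) (at_left 1)"
        using isCont_at_left[of "\<lambda>b. gT p q w lam b T - gT p q w lam b T0"] isCont_gT[OF q p] by simp
      then have "eventually (\<lambda>b. 0 < gT p q w lam b T - gT p q w lam b T0) (at_left 1)"
        using lt by (intro order_tendstoD(1)) auto
      then show "eventually (\<lambda>b. gT p q w lam b T0 < gT p q w lam b T) (at_left 1)"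
        by (rule eventually_mono) simp
    qed
    have ev3: "\<forall>T\<in>S \<inter> {T. opt p q w lam T}. eventually (\<lambda>b. dist (FF p q w lam b T d) H < e) (at_left 1)"
    proof
      fix T assume T: "T \<in> S \<inter> {T. opt p q w lam T}"
      then have "FF p q w lam 1 T d = H" unfolding H_def using opt_FF[OF q p w _ o] by blast
      moreover have "((\<lambda>b. FF p q w lam b T d) \<longlongrightarrow> FF p q w lam 1 T d) (at_left 1)"
        by (rule isCont_at_left[OF isCont_FF[OF q p]])
      ultimately show "eventually (\<lambda>b. dist (FF p q w lam b T d) H < e) (at_left 1)"
        using e by (metis tendstoD)
    qed
    have ev: "eventually (\<lambda>b. b \<in> {1/2<..<(1::real)}
        \<and> (\<forall>T\<in>S - {T. opt p q w lam T}. gT p q w lam b T0 < gT p q w lam b T)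
        \<and> (\<forall>T\<in>S \<inter> {T. opt p q w lam T}. dist (FF p q w lam b T d) H < e)) (at_left 1)"
    proof -
      have a: "eventually (\<lambda>b. \<forall>T\<in>S - {T. opt p q w lam T}. gT p q w lam b T0 < gT p q w lam b T) (at_left 1)"
        by (rule eventually_ball_finite[OF _ ev2]) (use finS in auto)
      have c: "eventually (\<lambda>b. \<forall>T\<in>S \<inter> {T. opt p q w lam T}. dist (FF p q w lam b T d) H < e) (at_left 1)"
        by (rule eventually_ball_finite[OF _ ev3]) (use finS in auto)
      show ?thesis by (rule eventually_conj[OF ev1 eventually_conj[OF a c]])
    qed
    show "eventually (\<lambda>b. dist (fb b) H < e) (at_left 1)"
    proof (rule eventually_mono[OF ev], elim conjE)
      fix b :: real assume b: "b \<in> {1/2<..<1}"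
        and A2: "\<forall>T\<in>S - {T. opt p q w lam T}. gT p q w lam b T0 < gT p q w lam b T"
        and A3: "\<forall>T\<in>S \<inter> {T. opt p q w lam T}. dist (FF p q w lam b T d) H < e"
      have b0: "0 < b" "b < 1" "1/2 < b" using b by auto
      obtain T where T1: "\<forall>s. disc_value p q w lam b s = ennreal (VT p q w lam b T s)"
        and T2: "\<forall>T'. gT p q w lam b T \<le> gT p q w lam b T'"
        and T3: "1 \<le> T \<longrightarrow> b*q*uinf q w lam b (gT p q w lam b T) T \<le> lam"
        using disc_structure[OF q p b0(1,2) w lam] by blast
      have nn: "\<And>s. 0 \<le> VT p q w lam b T s" using VT_nonneg[OF q p b0(1,2) _ lam] w by simp
      have fbT: "fb b = FF p q w lam b T d"
        unfolding fb_def using T1 nn VT_diff[OF b0(2), of p q w lam T d] by simp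
      have TS: "T \<in> S" unfolding S_def K_def using T_bound[OF q p b0(3) b0(2) w lam T2 T3] by simp
      have Topt: "opt p q w lam T"
      proof (rule ccontr)
        assume "\<not> opt p q w lam T"
        then have "gT p q w lam b T0 < gT p q w lam b T" using A2 TS by blast
        then show False using T2 by (meson not_le)
      qed
      show "dist (fb b) H < e" using A3 TS Topt fbT by simp
    qed
  qed
  then have "Lim (at_left 1) fb = H" by (rule tendsto_Lim[OF trivial_limit_at_left_real])
  then show ?thesis unfolding rel_value_def H_def fb_def .
qed


lemma passive_char:
  assumes q: "0 < q" "q \<le> 1" and p: "0 < p" "p \<le> 1" and w: "0 < w" and lam: "0 \<le> lam"
    and o: "opt p q w lam T0"
  shows "Job d \<in> passive_set p q w lam \<longleftrightarrow> aa q w d \<le> gT p q w lam 1 T0"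
proof -
  define h where "h = rel_value p q w lam"
  define g where "g = gT p q w lam 1 T0"
  define u where "u = uT q w lam 1 g T0"
  have hE: "h Empty = 0" unfolding h_def by (rule rel_value_E)
  have hJ: "h (Job k) = u k + g" for k
    unfolding h_def rel_value_J[OF q p w lam o] FF_def u_def g_def by simp
  have cons: "(1-p)*g = p*u 0" unfolding g_def u_def using consist[of q 1 p w lam T0] q p by simp
  have "Job d \<in> passive_set p q w lam \<longleftrightarrow> Vbar p q w (Job d) 0 lam \<le> Vbar p q w (Job d) 1 lam"
    unfolding passive_set_def by simp
  also have "\<dots> \<longleftrightarrow> w*real d + h (Job (Suc d)) \<le> w*real d + lam + (q*p*h (Job 0) + q*(1-p)*h Empty + (1-q)*h (Job (Suc d)))"
    unfolding Vbar_def h_def[symmetric] by (simp add: cost_def expect_J0 expect_J1)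
  also have "\<dots> \<longleftrightarrow> q*u (Suc d) \<le> lam + q*(p*u 0 - (1-p)*g)"
    unfolding hE hJ by (simp add: algebra_simps)
  also have "\<dots> \<longleftrightarrow> q*u (Suc d) \<le> lam" using cons by simp
  also have "\<dots> \<longleftrightarrow> aa q w d \<le> g" unfolding u_def g_def by (rule opt_passive[OF q p w o])
  finally show ?thesis unfolding g_def .
qed

lemma gT_mono_lam:
  assumes q: "0 < q" "q \<le> 1" and p: "0 < p" "p \<le> 1" and l: "lam1 \<le> lam2"
  shows "gT p q w lam1 1 T \<le> gT p q w lam2 1 T"
proof -
  have "AT q w lam1 1 T \<le> AT q w lam2 1 T" unfolding AT_def cc_def using l q
    by (simp add: divide_right_mono)
  then show ?thesis unfolding gT_def using den_pos[of q 1 p T] q p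
    by (intro divide_right_mono mult_left_mono) auto
qed

lemma user_ok:
  assumes q: "0 < q" "q \<le> 1" and p: "0 < p" "p \<le> 1" and w: "0 < w"
  shows "user_indexable p q w"
  unfolding user_indexable_def
proof (intro conjI allI impI)
  fix lam1 lam2 :: real assume l1: "0 \<le> lam1" and l12: "lam1 \<le> lam2"
  have l2: "0 \<le> lam2" using l1 l12 by simp
  show "passive_set p q w lam1 \<subseteq> passive_set p q w lam2"
  proof
    fix s assume s: "s \<in> passive_set p q w lam1"
    show "s \<in> passive_set p q w lam2"
    proof (cases s)
      case Empty then show ?thesis unfolding passive_set_def by simp
    next
      case (Job d)
      obtain T1 where T1: "opt p q w lam1 T1" using opt_exists[OF q p w l1] by blast
      obtain T2 where T2: "opt p q w lam2 T2" using opt_exists[OF q p w l2] by blast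
      have "aa q w d \<le> gT p q w lam1 1 T1" using s Job passive_char[OF q p w l1 T1] by simp
      also have "\<dots> \<le> gT p q w lam1 1 T2" using T1 unfolding opt_def by blast
      also have "\<dots> \<le> gT p q w lam2 1 T2" by (rule gT_mono_lam[OF q p l12])
      finally show ?thesis using Job passive_char[OF q p w l2 T2] by simp
    qed
  qed
next
  show "(\<Union>lam\<in>{0..}. passive_set p q w lam) = UNIV"
  proof (rule set_eqI, rule iffI)
    fix s :: st
    show "s \<in> (\<Union>lam\<in>{0..}. passive_set p q w lam)"
    proof (cases s)
      case Empty then show ?thesis unfolding passive_set_def by auto
    next
      case (Job d)
      define X where "X = aa q w d"
      have X0: "0 \<le> X" unfolding X_def aa_def using w q by simp
      define lam where "lam = X/p + q*X^2/(2*p^2*w)"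
      have lam0: "0 \<le> lam" unfolding lam_def using X0 p q w by simp
      obtain T where T: "opt p q w lam T" using opt_exists[OF q p w lam0] by blast
      define g where "g = gT p q w lam 1 T"
      have low: "p*(w*real T*(real T + 1)/2 + lam/q) \<le> g * (real T + 1/q)"
        unfolding g_def by (rule g1_lower[OF q p less_imp_le[OF w] lam0])
      have pl: "p*(lam/q) = X/q + X^2/(2*p*w)" unfolding lam_def using p q w
        by (simp add: field_simps power2_eq_square)
      have amgm: "X*real T \<le> p*w*(real T)^2/2 + X^2/(2*p*w)"
      proof -
        have e: "(p*w*real T - X)^2/(2*p*w) = p*w*(real T)^2/2 + X^2/(2*p*w) - X*real T"
          using p w by (simp add: field_simps power2_eq_square)
        have "0 \<le> (p*w*real T - X)^2/(2*p*w)" using p w by simp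
        then show ?thesis using e by linarith
      qed
      have "p*w*(real T)^2/2 \<le> p*(w*real T*(real T + 1)/2)"
        using p w by (simp add: power2_eq_square algebra_simps)
      moreover have e1: "X*(real T + 1/q) = X*real T + X/q" by (simp add: algebra_simps)
      moreover have e2: "p*(w*real T*(real T + 1)/2 + lam/q) = p*(w*real T*(real T + 1)/2) + p*(lam/q)"
        by (simp add: algebra_simps)
      ultimately have "X*(real T + 1/q) \<le> p*(w*real T*(real T + 1)/2 + lam/q)"
        using amgm pl by linarith
      then have "X*(real T + 1/q) \<le> g * (real T + 1/q)" using low by linarith
      moreover have "0 < real T + 1/q" using q by (simp add: add_nonneg_pos)
      ultimately have "X \<le> g" by simp
      then have "s \<in> passive_set p q w lam" using Job passive_char[OF q p w lam0 T] unfolding X_def g_def by simp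
      then show ?thesis using lam0 by auto
    qed
  qed simp
qed

theorem theorem1:
  fixes N :: nat and M :: "nat \<Rightarrow> 'u set"
    and p :: "nat \<Rightarrow> 'u \<Rightarrow> real" and q :: "nat \<Rightarrow> real" and w :: "nat \<Rightarrow> 'u \<Rightarrow> real"
  assumes p_pos: "\<And>i j. i \<in> {1..N} \<Longrightarrow> j \<in> M i \<Longrightarrow> 0 < p i j \<and> p i j \<le> 1"
    and q_prob: "\<And>i. i \<in> {1..N} \<Longrightarrow> 0 < q i \<and> q i \<le> 1"
    and w_pos: "\<And>i j. i \<in> {1..N} \<Longrightarrow> j \<in> M i \<Longrightarrow> 0 < w i j"
  shows "problem_indexable N M p q w"
  unfolding problem_indexable_def
proof (intro ballI)
  fix i j assume i: "i \<in> {1..N}" and j: "j \<in> M i"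
  show "user_indexable (p i j) (q i) (w i j)"
    using user_ok q_prob[OF i] p_pos[OF i j] w_pos[OF i j] by blast
qed

end
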